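(* Let $F$ be a field with $\mathrm{char}\,F\ne2$ and let $A$ be an involutive $F$-algebra. The following are equivalent: (i) $A$ is von-Neumann finite; (ii) every $3$-dimensional subalgebra of $A$ is either commutative or associative; (iii) every $3$-dimensional subalgebra of $A$ is either commutative or isomorphic to the algebra $U$ of upper triangular $2\times2$ matrices over $F$.
   Context: Algebras are unital, with bilinear not necessarily associative multiplication. $A$ is involutive if there is an anti-automorphism $a\mapsto\bar a$ with $\bar{\bar a}=a$, $a+\bar a\in F1$ and $a\bar a\in F1$ for all $a\in A$. $A$ is von-Neumann finite if $ab=1$ implies $ba=1$ for all $a,b\in A$. *)

theory Defs
  imports Main "HOL.Vector_Spaces"
begin

definition is_algebra :: "('f::field \<Rightarrow> 'a::ab_group_add \<Rightarrow> 'a) \<Rightarrow> ('a \<Rightarrow> 'a \<Rightarrow> 'a) \<Rightarrow> 'a \<Rightarrow> bool" where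
  "is_algebra sc mul e \<longleftrightarrow>
     vector_space sc \<and>
     (\<forall>x y z. mul (x + y) z = mul x z + mul y z) \<and>
     (\<forall>x y z. mul x (y + z) = mul x y + mul x z) \<and>
     (\<forall>c x y. mul (sc c x) y = sc c (mul x y)) \<and>
     (\<forall>c x y. mul x (sc c y) = sc c (mul x y)) \<and>
     (\<forall>x. mul e x = x \<and> mul x e = x)"

definition involutive :: "('f::field \<Rightarrow> 'a::ab_group_add \<Rightarrow> 'a) \<Rightarrow> ('a \<Rightarrow> 'a \<Rightarrow> 'a) \<Rightarrow> 'a \<Rightarrow> bool" where
  "involutive sc mul e \<longleftrightarrow>
     (\<exists>inv :: 'a \<Rightarrow> 'a.
        (\<forall>x y. inv (x + y) = inv x + inv y) \<and>
        (\<forall>c x. inv (sc c x) = sc c (inv x)) \<and>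
        (\<forall>x y. inv (mul x y) = mul (inv y) (inv x)) \<and>
        (\<forall>x. inv (inv x) = x) \<and>
        (\<forall>x. \<exists>t. x + inv x = sc t e) \<and>
        (\<forall>x. \<exists>n. mul x (inv x) = sc n e))"

definition vN_finite :: "('a \<Rightarrow> 'a \<Rightarrow> 'a) \<Rightarrow> 'a \<Rightarrow> bool" where
  "vN_finite mul e \<longleftrightarrow> (\<forall>a b. mul a b = e \<longrightarrow> mul b a = e)"

definition subalg :: "('f::field \<Rightarrow> 'a::ab_group_add \<Rightarrow> 'a) \<Rightarrow> ('a \<Rightarrow> 'a \<Rightarrow> 'a) \<Rightarrow> 'a \<Rightarrow> 'a set \<Rightarrow> bool" where
  "subalg sc mul e B \<longleftrightarrow> module.subspace sc B \<and> e \<in> B \<and> (\<forall>x\<in>B. \<forall>y\<in>B. mul x y \<in> B)"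

definition comm_on :: "('a \<Rightarrow> 'a \<Rightarrow> 'a) \<Rightarrow> 'a set \<Rightarrow> bool" where
  "comm_on mul B \<longleftrightarrow> (\<forall>x\<in>B. \<forall>y\<in>B. mul x y = mul y x)"

definition assoc_on :: "('a \<Rightarrow> 'a \<Rightarrow> 'a) \<Rightarrow> 'a set \<Rightarrow> bool" where
  "assoc_on mul B \<longleftrightarrow> (\<forall>x\<in>B. \<forall>y\<in>B. \<forall>z\<in>B. mul (mul x y) z = mul x (mul y z))"

text \<open>The algebra U of upper triangular 2x2 matrices over 'f: the triple (a,b,c)
stands for the matrix [[a,b],[0,c]]; addition and scaling are componentwise,
multiplication is matrix multiplication.\<close>

definition ut_mul :: "'f::field \<times> 'f \<times> 'f \<Rightarrow> 'f \<times> 'f \<times> 'f \<Rightarrow> 'f \<times> 'f \<times> 'f" where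
  "ut_mul u v = (case u of (a, b, c) \<Rightarrow> case v of (a', b', c') \<Rightarrow>
                   (a * a', a * b' + b * c', c * c'))"

definition ut_add :: "'f::field \<times> 'f \<times> 'f \<Rightarrow> 'f \<times> 'f \<times> 'f \<Rightarrow> 'f \<times> 'f \<times> 'f" where
  "ut_add u v = (case u of (a, b, c) \<Rightarrow> case v of (a', b', c') \<Rightarrow> (a + a', b + b', c + c'))"

definition ut_scale :: "'f::field \<Rightarrow> 'f \<times> 'f \<times> 'f \<Rightarrow> 'f \<times> 'f \<times> 'f" where
  "ut_scale r u = (case u of (a, b, c) \<Rightarrow> (r * a, r * b, r * c))"

definition iso_to_U :: "('f::field \<Rightarrow> 'a::ab_group_add \<Rightarrow> 'a) \<Rightarrow> ('a \<Rightarrow> 'a \<Rightarrow> 'a) \<Rightarrow> 'a \<Rightarrow> 'a set \<Rightarrow> bool" where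
  "iso_to_U sc mul e B \<longleftrightarrow>
     (\<exists>\<phi> :: 'a \<Rightarrow> 'f \<times> 'f \<times> 'f.
        bij_betw \<phi> B UNIV \<and>
        (\<forall>x\<in>B. \<forall>y\<in>B. \<phi> (x + y) = ut_add (\<phi> x) (\<phi> y)) \<and>
        (\<forall>c. \<forall>x\<in>B. \<phi> (sc c x) = ut_scale c (\<phi> x)) \<and>
        (\<forall>x\<in>B. \<forall>y\<in>B. \<phi> (mul x y) = ut_mul (\<phi> x) (\<phi> y)) \<and>
        \<phi> e = (1, 0, 1))"

end

theory Submission imports Defs begin

locale IA = vector_space sc for sc :: "'f::field \<Rightarrow> 'a::ab_group_add \<Rightarrow> 'a" (infixr \<open>*s\<close> 75) +
  fixes mul :: "'a \<Rightarrow> 'a \<Rightarrow> 'a" (infixl \<open>**\<close> 70) and e :: 'a and inv :: "'a \<Rightarrow> 'a"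
  assumes ladd: "(x + y) ** z = x ** z + y ** z"
  and radd: "x ** (y + z) = x ** y + x ** z"
  and lsc: "(c *s x) ** y = c *s (x ** y)"
  and rsc: "x ** (c *s y) = c *s (x ** y)"
  and lunit[simp]: "e ** x = x" and runit[simp]: "x ** e = x"
  and iadd: "inv (x + y) = inv x + inv y"
  and isc: "inv (c *s x) = c *s inv x"
  and imul: "inv (x ** y) = inv y ** inv x"
  and iinv[simp]: "inv (inv x) = x"
  and itr: "\<exists>t. x + inv x = t *s e"
  and inr: "\<exists>n. x ** inv x = n *s e"
  and enz: "e \<noteq> 0"
  and two: "(2::'f) \<noteq> 0"
begin

lemma mul_zero_left[simp]: "0 ** x = 0"
  using ladd[of 0 0 x] by simp
lemma mul_zero_right[simp]: "x ** 0 = 0"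
  using radd[of x 0 0] by simp
lemma mul_minus_left: "(- x) ** y = - (x ** y)"
  using ladd[of x "-x" y] by (metis minus_unique add.right_inverse mul_zero_left)
lemma mul_minus_right: "x ** (- y) = - (x ** y)"
  using radd[of x y "-y"] by (metis minus_unique add.right_inverse mul_zero_right)
lemma mul_diff_left: "(x - y) ** z = x ** z - y ** z"
  using ladd[of x "-y" z] by (simp add: mul_minus_left)
lemma mul_diff_right: "z ** (x - y) = z ** x - z ** y"
  using radd[of z x "-y"] by (simp add: mul_minus_right)

lemmas mul_simps = ladd radd lsc rsc mul_minus_left mul_minus_right mul_diff_left mul_diff_right

lemma inv_zero[simp]: "inv 0 = 0"
  using iadd[of 0 0] by simp
lemma inv_minus: "inv (- x) = - inv x"
  using iadd[of x "-x"] by (metis minus_unique add.right_inverse inv_zero)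
lemma inv_diff: "inv (x - y) = inv x - inv y"
  using iadd[of x "-y"] by (simp add: inv_minus)

definition tr where "tr x = (THE t. x + inv x = t *s e)"
definition nr where "nr x = (THE n. x ** inv x = n *s e)"

lemma tr_eq: "x + inv x = tr x *s e"
proof -
  obtain t where t: "x + inv x = t *s e" using itr by blast
  have "(THE t. x + inv x = t *s e) = t"
    by (rule the_equality) (use t enz in auto)
  then show ?thesis using t by (simp add: tr_def)
qed

lemma tr_unique: "x + inv x = t *s e \<Longrightarrow> tr x = t"
  using tr_eq[of x] enz by simp

lemma nr_eq: "x ** inv x = nr x *s e"
proof -
  obtain t where t: "x ** inv x = t *s e" using inr by blast
  have "(THE t. x ** inv x = t *s e) = t"
    by (rule the_equality) (use t enz in auto)
  then show ?thesis using t by (simp add: nr_def)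
qed

lemma inv_eq: "inv x = tr x *s e - x"
  using tr_eq[of x] by (simp add: algebra_simps)

lemma sq: "x ** x = tr x *s x - nr x *s e"
  using nr_eq[of x] by (simp add: inv_eq mul_simps algebra_simps)

lemma inv_e[simp]: "inv e = e"
proof -
  have "y ** inv e = y" for y
    using imul[of e "inv y"] by simp
  from this[of e] show ?thesis by simp
qed

lemma tr_e: "tr e = 2"
  by (rule tr_unique) (simp add: scale_left_distrib[of 1 1, simplified] )

lemma tr_add: "tr (x + y) = tr x + tr y"
  by (rule tr_unique) (simp add: iadd scale_left_distrib tr_eq[symmetric] algebra_simps)

lemma tr_scale: "tr (c *s x) = c * tr x"
  by (rule tr_unique) (simp add: isc tr_eq[symmetric] scale_right_distrib[symmetric] flip: scale_scale)

lemma tr_minus: "tr (- x) = - tr x"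
  by (rule tr_unique) (simp add: inv_minus flip: tr_eq minus_add_distrib)

lemma tr_diff: "tr (x - y) = tr x - tr y"
  using tr_add[of x "-y"] by (simp add: tr_minus)

lemma tr_zero[simp]: "tr 0 = 0"
  using tr_scale[of 0 0] by simp

definition lc where "lc p q c0 c1 c2 = c0 *s e + c1 *s p + c2 *s q"

lemma mul_lc_left: "lc p q c0 c1 c2 ** z = c0 *s z + c1 *s (p ** z) + c2 *s (q ** z)"
  by (simp add: lc_def mul_simps)
lemma mul_lc_right: "z ** lc p q c0 c1 c2 = c0 *s z + c1 *s (z ** p) + c2 *s (z ** q)"
  by (simp add: lc_def mul_simps)
lemma lc_add: "lc p q a0 a1 a2 + lc p q b0 b1 b2 = lc p q (a0+b0) (a1+b1) (a2+b2)"
  by (simp add: lc_def scale_left_distrib algebra_simps)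
lemma lc_scale: "c *s lc p q a0 a1 a2 = lc p q (c*a0) (c*a1) (c*a2)"
  by (simp add: lc_def scale_right_distrib)
lemma lc_diff: "lc p q a0 a1 a2 - lc p q b0 b1 b2 = lc p q (a0-b0) (a1-b1) (a2-b2)"
  by (simp add: lc_def scale_left_diff_distrib algebra_simps)
lemma tr_lc: "tr (lc p q c0 c1 c2) = c0 * 2 + c1 * tr p + c2 * tr q"
  by (simp add: lc_def tr_add tr_scale tr_e)

lemma span3: "z \<in> span {e,p,q} \<longleftrightarrow> (\<exists>c0 c1 c2. z = lc p q c0 c1 c2)"
proof
  assume "z \<in> span {e,p,q}"
  then obtain k0 where "z - k0 *s e \<in> span {p,q}" by (auto simp: span_insert)
  then obtain k1 where "z - k0 *s e - k1 *s p \<in> span {q}" by (auto simp: span_insert)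
  then obtain k2 where "z - k0 *s e - k1 *s p = k2 *s q" by (auto simp: span_singleton)
  then have "z = lc p q k0 k1 k2" by (simp add: lc_def algebra_simps)
  then show "\<exists>c0 c1 c2. z = lc p q c0 c1 c2" by blast
next
  assume "\<exists>c0 c1 c2. z = lc p q c0 c1 c2"
  then obtain c0 c1 c2 where "z = lc p q c0 c1 c2" by blast
  moreover have "e \<in> span {e,p,q}" "p \<in> span {e,p,q}" "q \<in> span {e,p,q}"
    by (auto intro: span_base)
  ultimately show "z \<in> span {e,p,q}"
    by (simp add: lc_def span_add span_scale)
qed

lemma two_scale: "2 *s x = x + x"
  using scale_left_distrib[of 1 1 x] by (simp add: one_add_one)

lemma comm_aux1: "q = a *s e + b *s p \<Longrightarrow> p ** q = q ** p"
  by (simp add: mul_simps)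
lemma comm_aux2: "p = a *s e \<Longrightarrow> p ** q = q ** p"
  by (simp add: mul_simps)

lemma noncomm_lc_zero:
  assumes nc: "p ** q \<noteq> q ** p" and z: "lc p q c0 c1 c2 = 0"
  shows "c0 = 0 \<and> c1 = 0 \<and> c2 = 0"
proof -
  have c2: "c2 = 0"
  proof (rule ccontr)
    assume c2: "c2 \<noteq> 0"
    have "c2 *s q = - (c0 *s e + c1 *s p)"
      using z unfolding lc_def by (metis add.commute eq_neg_iff_add_eq_0)
    then have "(1/c2) *s (c2 *s q) = (1/c2) *s (- (c0 *s e + c1 *s p))" by simp
    then have "q = (- c0/c2) *s e + (- c1/c2) *s p"
      using c2 by (simp add: scale_right_distrib scale_right_diff_distrib)
    then show False using comm_aux1 nc by blast
  qed
  have c1: "c1 = 0"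
  proof (rule ccontr)
    assume c1: "c1 \<noteq> 0"
    have "c1 *s p = - (c0 *s e)"
      using z c2 unfolding lc_def by (metis add.commute add_0_right scale_zero_left eq_neg_iff_add_eq_0)
    then have "(1/c1) *s (c1 *s p) = (1/c1) *s (- (c0 *s e))" by simp
    then have "p = (- c0/c1) *s e"
      using c1 by (simp add: scale_right_distrib)
    then show False using comm_aux2 nc by blast
  qed
  have "c0 *s e = 0" using z c1 c2 by (simp add: lc_def)
  then show ?thesis using c1 c2 enz by simp
qed

lemma lc_inj:
  assumes nc: "p ** q \<noteq> q ** p" and z: "lc p q a0 a1 a2 = lc p q b0 b1 b2"
  shows "a0 = b0 \<and> a1 = b1 \<and> a2 = b2"
proof -
  have "lc p q (a0-b0) (a1-b1) (a2-b2) = 0" using z by (simp flip: lc_diff)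
  from noncomm_lc_zero[OF nc this] show ?thesis by simp
qed

lemma indep3:
  assumes nc: "p ** q \<noteq> q ** p"
  shows "independent {e,p,q}" "card {e,p,q} = 3"
proof -
  have q0: "q \<noteq> 0" proof assume "q = 0" then show False using nc by simp qed
  have pq: "p \<noteq> q" proof assume "p = q" then show False using nc by simp qed
  have ep: "e \<noteq> p" proof assume "e = p" then show False using nc by (metis lunit runit) qed
  have eq: "e \<noteq> q" proof assume "e = q" then show False using nc by (metis lunit runit) qed
  have iq: "independent {q}" using q0 independent_insert[of q "{}"] by simp
  have "p \<notin> span {q}"
  proof
    assume "p \<in> span {q}"
    then obtain k where "p = k *s q" by (auto simp: span_singleton)
    then have "lc p q 0 (-1) k = 0" by (simp add: lc_def)
    from noncomm_lc_zero[OF nc this] show False by simp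
  qed
  then have ipq: "independent {p,q}" using iq pq independent_insert[of p "{q}"] by simp
  have "e \<notin> span {p,q}"
  proof
    assume "e \<in> span {p,q}"
    then obtain k where "e - k *s p \<in> span {q}" by (auto simp: span_insert)
    then obtain k2 where "e - k *s p = k2 *s q" by (auto simp: span_singleton)
    then have "e - k *s p - k2 *s q = 0" by simp
    then have "lc p q 1 (-k) (-k2) = 0" by (simp add: lc_def)
    from noncomm_lc_zero[OF nc this] show False by simp
  qed
  then show "independent {e,p,q}" using ipq ep eq independent_insert[of e "{p,q}"] by simp
  show "card {e,p,q} = 3" using pq ep eq by simp
qed

lemma fill3:
  assumes nc: "p ** q \<noteq> q ** p" and sub: "{e,p,q} \<subseteq> B" and d: "dim B = 3"
  shows "B \<subseteq> span {e,p,q}"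
proof
  fix z assume zB: "z \<in> B"
  show "z \<in> span {e,p,q}"
  proof (rule ccontr)
    assume zn: "z \<notin> span {e,p,q}"
    obtain A where A: "A \<subseteq> B" "independent A" "B \<subseteq> span A" "card A = dim B"
      by (rule basis_exists)
    have fA: "finite A" using A(4) d by (metis card.infinite zero_neq_numeral)
    have zn': "z \<notin> {e,p,q}"
    proof
      assume "z \<in> {e,p,q}"
      then have "z \<in> span {e,p,q}" by (rule span_base)
      with zn show False by simp
    qed
    have ind: "independent (insert z {e,p,q})"
      using independent_insert[of z "{e,p,q}"] zn zn' indep3(1)[OF nc] by (simp del: insert_iff)
    have "insert z {e,p,q} \<subseteq> span A" using A(3) sub zB by blast
    from independent_span_bound[OF fA ind this] have "card (insert z {e,p,q}) \<le> 3"
      using A(4) d by simp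
    moreover have "card (insert z {e,p,q}) = Suc (card {e,p,q})"
      by (rule card_insert_disjoint) (use zn' in auto)
    ultimately have "Suc (card {e,p,q}) \<le> 3" by simp
    then
    show False using indep3(2)[OF nc] by simp
  qed
qed

lemma half:
  assumes h1: "a + b = T *s e" and h2: "a - b = 2 *s x"
  shows "a = (T/2) *s e + x" "b = (T/2) *s e - x"
proof -
  have "a + a = (a + b) + (a - b)" by (simp add: algebra_simps)
  then have "2 *s a = T *s e + 2 *s x" using h1 h2 by (simp add: two_scale)
  then have "(1/2) *s (2 *s a) = (1/2) *s (T *s e + 2 *s x)" by simp
  then show a: "a = (T/2) *s e + x" using two by (simp add: scale_right_distrib)
  have "b = a - (a - b)" by simp
  also have "\<dots> = a - 2 *s x" using h2 by (simp only:)
  also have "\<dots> = (T/2) *s e + x - (x + x)" by (simp only: a two_scale)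
  finally have bb: "b = (T/2) *s e + x - (x + x)" .
  show "b = (T/2) *s e - x" unfolding bb diff_diff_eq[symmetric] by simp
qed

lemma structure3:
  assumes sB: "subspace B" and eB: "e \<in> B" and cl: "\<forall>x\<in>B. \<forall>y\<in>B. x ** y \<in> B"
    and d: "dim B = 3" and nc: "\<not> (\<forall>x\<in>B. \<forall>y\<in>B. x ** y = y ** x)"
  obtains x y P Q S where "x \<in> B" "y \<in> B" "x \<noteq> 0" "x ** y \<noteq> y ** x"
    "x ** x = (-P) *s e" "y ** y = (-Q) *s e" "x ** y = S *s e + x" "y ** x = S *s e - x"
    "B \<subseteq> span {e,x,y}"
proof -
  obtain u v where uv: "u \<in> B" "v \<in> B" "u ** v \<noteq> v ** u" using nc by blast
  define p where "p = u - (tr u / 2) *s e"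
  define q where "q = v - (tr v / 2) *s e"
  have pB: "p \<in> B" "q \<in> B" using sB eB uv
    by (simp_all add: p_def q_def subspace_diff subspace_scale)
  have trp: "tr p = 0" "tr q = 0" using two by (simp_all add: p_def q_def tr_diff tr_scale tr_e)
  have "p ** q - q ** p = u ** v - v ** u" by (simp add: p_def q_def mul_simps algebra_simps)
  then have ncpq: "p ** q \<noteq> q ** p" using uv(3) by auto
  have invp: "inv p = - p" "inv q = - q" using trp by (simp_all add: inv_eq)
  define w where "w = p ** q - q ** p"
  have wB: "w \<in> B" using cl pB sB by (simp add: w_def subspace_diff)
  have w0: "w \<noteq> 0" using ncpq by (simp add: w_def)
  have trw: "tr w = 0"
    by (rule tr_unique) (simp add: w_def inv_diff imul invp mul_minus_left mul_minus_right)
  have "B \<subseteq> span {e,p,q}" using fill3[OF ncpq] eB pB d by simp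
  with wB have "w \<in> span {e,p,q}" by blast
  then obtain c0 c1 c2 where wc: "w = lc p q c0 c1 c2" using span3[of w p q] by blast
  have "c0 = 0" using trw two by (simp add: wc tr_lc trp)
  then have wc': "w = c1 *s p + c2 *s q" using wc by (simp add: lc_def)
  have "(c1 *s p + c2 *s q) ** q - q ** (c1 *s p + c2 *s q) = c1 *s (p ** q - q ** p)"
    by (simp add: mul_simps scale_right_diff_distrib)
  then have wq: "w ** q - q ** w = c1 *s w" by (simp only: wc'[symmetric] w_def)
  have "(c1 *s p + c2 *s q) ** p - p ** (c1 *s p + c2 *s q) = (-c2) *s (p ** q - q ** p)"
    by (simp add: mul_simps scale_right_diff_distrib)
  then have wp: "w ** p - p ** w = (-c2) *s w" by (simp only: wc'[symmetric] w_def)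
  obtain y where yB: "y \<in> B" and trY: "tr y = 0" and xy: "w ** y - y ** w = 2 *s w"
  proof (cases "c1 = 0")
    case False
    show ?thesis
    proof (rule that[of "(2/c1) *s q"])
      show "(2/c1) *s q \<in> B" using pB sB by (simp add: subspace_scale)
      show "tr ((2/c1) *s q) = 0" by (simp add: tr_scale trp)
      have "w ** ((2/c1) *s q) - ((2/c1) *s q) ** w = (2/c1) *s (w ** q - q ** w)"
        by (simp add: mul_simps scale_right_diff_distrib)
      also have "\<dots> = 2 *s w" using False by (simp add: wq)
      finally show "w ** ((2/c1) *s q) - ((2/c1) *s q) ** w = 2 *s w" .
    qed
  next
    case True
    then have c2: "c2 \<noteq> 0" using w0 wc' by auto
    show ?thesis
    proof (rule that[of "(-2/c2) *s p"])
      show "(-2/c2) *s p \<in> B" using pB sB by (simp add: subspace_scale subspace_neg)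
      show "tr ((-2/c2) *s p) = 0" by (simp add: tr_scale trp tr_minus)
      have "w ** ((-2/c2) *s p) - ((-2/c2) *s p) ** w = (-2/c2) *s (w ** p - p ** w)"
        by (simp add: mul_simps scale_right_diff_distrib)
      also have "\<dots> = 2 *s w" using c2 by (simp add: wp)
      finally show "w ** ((-2/c2) *s p) - ((-2/c2) *s p) ** w = 2 *s w" .
    qed
  qed
  have nxy: "w ** y \<noteq> y ** w"
  proof
    assume "w ** y = y ** w"
    then have "2 *s w = 0" using xy by simp
    then show False using two w0 by simp
  qed
  have invw: "inv w = - w" "inv y = - y" using trw trY by (simp_all add: inv_eq)
  have xx: "w ** w = (- nr w) *s e" using sq[of w] trw by simp
  have yy: "y ** y = (- nr y) *s e" using sq[of y] trY by simp
  have "w ** y + y ** w = tr (w ** y) *s e"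
    using tr_eq[of "w ** y"] by (simp add: imul invw mul_minus_left mul_minus_right)
  from half[OF this xy] have h: "w ** y = (tr (w ** y) / 2) *s e + w" "y ** w = (tr (w ** y) / 2) *s e - w" .
  have "B \<subseteq> span {e,w,y}" using fill3[OF nxy] eB wB yB d by simp
  then show thesis using that[OF wB yB w0 nxy xx yy h] by simp
qed

lemma lc_cong: "a = a' \<Longrightarrow> b = b' \<Longrightarrow> c = c' \<Longrightarrow> lc p q a b c = lc p q a' b' c'"
  by simp

lemma mul_cmb:
  assumes xx: "x ** x = (-P) *s e" and yy: "y ** y = (-Q) *s e"
    and xy: "x ** y = S *s e + x" and yx: "y ** x = S *s e - x"
  shows "lc x y a0 a1 a2 ** lc x y b0 b1 b2 =
    lc x y (a0*b0 - P*a1*b1 - Q*a2*b2 + S*(a1*b2 + a2*b1)) (a0*b1 + b0*a1 + (a1*b2 - a2*b1)) (a0*b2 + b0*a2)"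
proof -
  have X: "x ** lc x y b0 b1 b2 = lc x y (-P*b1 + S*b2) (b0 + b2) 0"
    unfolding mul_lc_right xx xy unfolding lc_def
    by (simp add: scale_left_distrib scale_right_distrib algebra_simps)
  have Y: "y ** lc x y b0 b1 b2 = lc x y (S*b1 - Q*b2) (- b1) b0"
    unfolding mul_lc_right yy yx unfolding lc_def
    by (simp add: scale_left_distrib scale_right_distrib scale_left_diff_distrib scale_right_diff_distrib algebra_simps)
  have "lc x y a0 a1 a2 ** lc x y b0 b1 b2 = a0 *s lc x y b0 b1 b2 + a1 *s lc x y (-P*b1 + S*b2) (b0 + b2) 0 + a2 *s lc x y (S*b1 - Q*b2) (- b1) b0"
    unfolding mul_lc_left X Y by simp
  also have "\<dots> = lc x y (a0*b0 - P*a1*b1 - Q*a2*b2 + S*(a1*b2 + a2*b1)) (a0*b1 + b0*a1 + (a1*b2 - a2*b1)) (a0*b2 + b0*a2)"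
    unfolding lc_scale lc_add by (rule lc_cong) (simp_all add: algebra_simps)
  finally show ?thesis .
qed

lemma vn_to_iso:
  assumes vn: "\<forall>a b. a ** b = e \<longrightarrow> b ** a = e"
    and sB: "subspace B" and eB: "e \<in> B" and cl: "\<forall>x\<in>B. \<forall>y\<in>B. x ** y \<in> B"
    and d: "dim B = 3" and nc: "\<not> (\<forall>x\<in>B. \<forall>y\<in>B. x ** y = y ** x)"
  shows "iso_to_U sc mul e B"
proof -
  obtain x y P Q S where xB: "x \<in> B" and yB: "y \<in> B" and x0: "x \<noteq> 0" and nxy: "x ** y \<noteq> y ** x"
    and xx: "x ** x = (-P) *s e" and yy: "y ** y = (-Q) *s e" and xy: "x ** y = S *s e + x"
    and yx: "y ** x = S *s e - x" and Bsp: "B \<subseteq> span {e,x,y}"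
    by (rule structure3[OF sB eB cl d nc])
  note M = mul_cmb[OF xx yy xy yx]
  have key: "b0*a1 + a0*b1 + (b1*a2 - b2*a1) = 0"
    if "a0*b0 - P*a1*b1 - Q*a2*b2 + S*(a1*b2 + a2*b1) = 1"
       "a0*b1 + b0*a1 + (a1*b2 - a2*b1) = 0" "a0*b2 + b0*a2 = 0"
    for a0 a1 a2 b0 b1 b2
  proof -
    have "lc x y a0 a1 a2 ** lc x y b0 b1 b2 = lc x y 1 0 0" unfolding M using that by (intro lc_cong) simp_all
    then have "lc x y a0 a1 a2 ** lc x y b0 b1 b2 = e" by (simp add: lc_def)
    with vn have "lc x y b0 b1 b2 ** lc x y a0 a1 a2 = e" by blast
    then have "lc x y b0 b1 b2 ** lc x y a0 a1 a2 = lc x y 1 0 0" by (simp add: lc_def)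
    from lc_inj[OF nxy this[unfolded M]] show ?thesis by simp
  qed
  have S0: "S = 0"
  proof (rule ccontr)
    assume S: "S \<noteq> 0"
    have "(-1/S)*1 + 0*0 + (0*0 - (1/S)*1) = 0"
      by (rule key[of 0 "-1/S" 1 0 0 "1/S"]) (use S in \<open>simp_all add: field_simps\<close>)
    then show False using S two by (simp add: field_simps)
  qed
  have P0: "P = 0"
  proof (rule ccontr)
    assume P: "P \<noteq> 0"
    have "1*1 + 0*(-1/P) + ((-1/P)*0 - (-1)*1) = 0"
      by (rule key[of 0 1 1 "-1/P" 0 "-1"]) (use P S0 in \<open>simp_all add: field_simps\<close>)
    then show False using two by (simp add: one_add_one)
  qed
  have Q1: "Q = -1"
  proof (rule ccontr)
    assume Q: "Q \<noteq> -1"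
    then have Q': "1 + Q \<noteq> 0" by (metis add.commute add_eq_0_iff)
    have "(1/(1+Q))*0 + 1*1 + (1*1 - (-1/(1+Q))*0) = 0"
      by (rule key[of 1 "1/(1+Q)" 0 1 1 "-1/(1+Q)"]) (use Q' P0 S0 in \<open>simp_all add: field_simps\<close>)
    then show False using two by (simp add: one_add_one)
  qed
  have four: "(4::'f) \<noteq> 0"
  proof -
    have "(4::'f) = 2 * 2" by simp
    then show ?thesis using two by (metis mult_eq_0_iff)
  qed
  have sixteen: "(16::'f) \<noteq> 0"
  proof -
    have "(16::'f) = 4 * 4" by simp
    then show ?thesis using four by (metis mult_eq_0_iff)
  qed
  define \<psi> :: "'f \<times> 'f \<times> 'f \<Rightarrow> 'a" where
    "\<psi> u = lc x y ((fst u + snd (snd u))/2) (fst (snd u)) ((snd (snd u) - fst u)/2)" for u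
  have psi_add: "\<psi> (ut_add u v) = \<psi> u + \<psi> v" for u v
    using two four by (cases u; cases v) (auto simp: \<psi>_def ut_add_def lc_add intro!: lc_cong simp: field_simps)
  have psi_scale: "\<psi> (ut_scale r u) = r *s \<psi> u" for r u
    using two four by (cases u) (auto simp: \<psi>_def ut_scale_def lc_scale intro!: lc_cong simp: field_simps)
  have psi_mul: "\<psi> (ut_mul u v) = \<psi> u ** \<psi> v" for u v
    using two four sixteen by (cases u; cases v) (auto simp: \<psi>_def ut_mul_def M S0 P0 Q1 intro!: lc_cong simp: field_simps)
  have psi_e: "\<psi> (1,0,1) = e" using two by (simp add: \<psi>_def lc_def)
  have inj: "inj \<psi>"
  proof (rule injI)
    fix u v assume uv: "\<psi> u = \<psi> v"
    obtain a b c where u: "u = (a,b,c)" by (cases u)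
    obtain a' b' c' where v: "v = (a',b',c')" by (cases v)
    from lc_inj[OF nxy uv[unfolded \<psi>_def u v]] have
      h: "(a + c)/2 = (a' + c')/2" "b = b'" "(c - a)/2 = (c' - a')/2" by auto
    from h(1) two have h1: "a + c = a' + c'" by (metis divide_cancel_right)
    from h(3) two have h2: "c - a = c' - a'" by (metis divide_cancel_right)
    have "(a + c) + (c - a) = (a' + c') + (c' - a')" using h1 h2 by simp
    then have "2 * c = 2 * c'" by (metis mult_2 add.commute add_diff_cancel_left' add_diff_eq diff_add_cancel)
    then have cc: "c = c'" using two by simp
    then have "a = a'" using h1 by simp
    with cc h(2) show "u = v" by (simp add: u v)
  qed
  have rng: "range \<psi> = B"
  proof
    show "range \<psi> \<subseteq> B"
    proof
      fix z assume "z \<in> range \<psi>"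
      then obtain u where "z = \<psi> u" by blast
      then show "z \<in> B" unfolding \<psi>_def lc_def
        by (simp add: subspace_add[OF sB] subspace_scale[OF sB] eB xB yB)
    qed
    show "B \<subseteq> range \<psi>"
    proof
      fix z assume "z \<in> B"
      with Bsp have "z \<in> span {e,x,y}" by blast
      then obtain c0 c1 c2 where z: "z = lc x y c0 c1 c2" using span3[of z x y] by blast
      have "\<psi> (c0 - c2, c1, c0 + c2) = z" unfolding z \<psi>_def
        using two by (intro lc_cong) (simp_all add: field_simps)
      then show "z \<in> range \<psi>" by (metis rangeI)
    qed
  qed
  define \<phi> where "\<phi> = inv_into UNIV \<psi>"
  have bij: "bij_betw \<psi> UNIV B" using inj rng by (simp add: bij_betw_def)
  have pp: "\<psi> (\<phi> z) = z" if "z \<in> B" for z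
    using that rng by (simp add: \<phi>_def f_inv_into_f)
  show ?thesis unfolding iso_to_U_def
  proof (intro exI[of _ \<phi>] conjI ballI allI)
    show "bij_betw \<phi> B UNIV" unfolding \<phi>_def by (rule bij_betw_inv_into[OF bij])
    show "\<phi> (u + v) = ut_add (\<phi> u) (\<phi> v)" if "u \<in> B" "v \<in> B" for u v
      by (rule injD[OF inj]) (simp add: psi_add pp that subspace_add[OF sB])
    show "\<phi> (c *s u) = ut_scale c (\<phi> u)" if "u \<in> B" for c u
      by (rule injD[OF inj]) (simp add: psi_scale pp that subspace_scale[OF sB])
    show "\<phi> (u ** v) = ut_mul (\<phi> u) (\<phi> v)" if "u \<in> B" "v \<in> B" for u v
      by (rule injD[OF inj]) (simp add: psi_mul pp that cl)
    show "\<phi> e = (1, 0, 1)" unfolding \<phi>_def psi_e[symmetric] by (rule inv_into_f_f[OF inj]) simp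
  qed
qed

lemma assoc_to_vn:
  assumes H: "\<forall>B. subspace B \<and> e \<in> B \<and> (\<forall>x\<in>B. \<forall>y\<in>B. x ** y \<in> B) \<and> dim B = 3 \<longrightarrow>
     (\<forall>x\<in>B. \<forall>y\<in>B. x ** y = y ** x) \<or> (\<forall>x\<in>B. \<forall>y\<in>B. \<forall>z\<in>B. (x ** y) ** z = x ** (y ** z))"
  shows "\<forall>a b. a ** b = e \<longrightarrow> b ** a = e"
proof (intro allI impI)
  fix a b assume ab: "a ** b = e"
  show "b ** a = e"
  proof (rule ccontr)
    assume nba: "b ** a \<noteq> e"
    then have nc: "a ** b \<noteq> b ** a" using ab by simp
    define S where "S = span {e,a,b}"
    have eS: "e \<in> S" and aS: "a \<in> S" and bS: "b \<in> S" unfolding S_def by (auto intro: span_base)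
    have sqS: "z ** z \<in> S" if "z \<in> S" for z
      unfolding sq using that eS by (simp add: S_def span_diff span_scale)
    have aa: "a ** a \<in> S" using sqS aS .
    have bb: "b ** b \<in> S" using sqS bS .
    have abS: "a ** b \<in> S" using ab eS by simp
    have "(a + b) ** (a + b) \<in> S" using sqS aS bS by (simp add: S_def span_add)
    moreover have "b ** a = (a + b) ** (a + b) - a ** a - a ** b - b ** b"
      by (simp add: ladd radd algebra_simps)
    ultimately have baS: "b ** a \<in> S" using aa bb abS by (simp add: S_def span_diff)
    have lS: "z ** w \<in> S" if "z \<in> {e,a,b}" "w \<in> {e,a,b}" for z w
      using that eS aS bS aa bb abS baS by auto
    have cl: "\<forall>x\<in>S. \<forall>y\<in>S. x ** y \<in> S"
    proof (intro ballI)
      fix z1 z2 assume z1: "z1 \<in> S" and z2: "z2 \<in> S"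
      obtain c0 c1 c2 where c: "z1 = lc a b c0 c1 c2" using z1 span3[of z1 a b] by (auto simp: S_def)
      obtain d0 d1 d2 where d: "z2 = lc a b d0 d1 d2" using z2 span3[of z2 a b] by (auto simp: S_def)
      have "p ** z2 \<in> S" if "p \<in> {e,a,b}" for p
        unfolding d mul_lc_right using lS[OF that] that eS aS bS
        by (auto simp: S_def span_add span_scale)
      then show "z1 ** z2 \<in> S" unfolding c mul_lc_left
        using z2 by (simp add: S_def span_add span_scale)
    qed
    have dS: "dim S = 3" unfolding S_def
      using dim_span_eq_card_independent[OF indep3(1)[OF nc]] indep3(2)[OF nc] by simp
    have "subspace S" by (simp add: S_def)
    then have "subspace S \<and> e \<in> S \<and> (\<forall>x\<in>S. \<forall>y\<in>S. x ** y \<in> S) \<and> dim S = 3"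
      using eS cl dS by simp
    from H[THEN spec[of _ S], THEN mp, OF this]
    have "(\<forall>x\<in>S. \<forall>y\<in>S. x ** y = y ** x) \<or> (\<forall>x\<in>S. \<forall>y\<in>S. \<forall>z\<in>S. (x ** y) ** z = x ** (y ** z))" .
    moreover have "\<not> (\<forall>x\<in>S. \<forall>y\<in>S. x ** y = y ** x)" using nc aS bS by metis
    ultimately have as: "\<forall>x\<in>S. \<forall>y\<in>S. \<forall>z\<in>S. (x ** y) ** z = x ** (y ** z)"
      by blast
    define ab' where "ab' = inv a"
    have abS': "ab' \<in> S" using eS aS by (simp add: ab'_def inv_eq S_def span_diff span_scale)
    have aba: "ab' ** a = nr a *s e"
      by (simp add: ab'_def inv_eq mul_diff_left lsc sq)
    have "(ab' ** a) ** b = ab' ** (a ** b)" using as abS' aS bS by blast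
    then have nb: "nr a *s b = ab'" using ab by (simp add: aba lsc)
    show False
    proof (cases "nr a = 0")
      case True
      then have "inv a = 0" using nb by (simp add: ab'_def)
      then have "a = 0" by (metis iinv inv_zero)
      then show False using ab enz by simp
    next
      case False
      have "(1 / nr a) *s (nr a *s b) = b" using False by simp
      then have "b = (1 / nr a) *s ab'" using nb by simp
      then have "b ** a = (1 / nr a) *s (nr a *s e)" by (simp add: lsc aba)
      then show False using False nba by simp
    qed
  qed
qed

lemma iso_assoc:
  assumes cl: "\<forall>x\<in>B. \<forall>y\<in>B. x ** y \<in> B" and iso: "iso_to_U sc mul e B"
  shows "\<forall>x\<in>B. \<forall>y\<in>B. \<forall>z\<in>B. (x ** y) ** z = x ** (y ** z)"
proof -
  from iso obtain \<phi> :: "'a \<Rightarrow> 'f \<times> 'f \<times> 'f" where b: "bij_betw \<phi> B UNIV" and m: "\<forall>x\<in>B. \<forall>y\<in>B. \<phi> (x ** y) = ut_mul (\<phi> x) (\<phi> y)"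
    unfolding iso_to_U_def by (elim exE conjE) blast
  have ua: "ut_mul (ut_mul u v) w = ut_mul u (ut_mul v w)" for u v w :: "'f \<times> 'f \<times> 'f"
    by (cases u; cases v; cases w) (simp add: ut_mul_def algebra_simps)
  have inj: "inj_on \<phi> B" using b by (simp add: bij_betw_def)
  show ?thesis
  proof (intro ballI)
    fix x y z assume xyz: "x \<in> B" "y \<in> B" "z \<in> B"
    have "\<phi> ((x ** y) ** z) = \<phi> (x ** (y ** z))"
      using xyz cl m ua by simp
    then show "(x ** y) ** z = x ** (y ** z)"
      using inj xyz cl by (meson inj_onD)
  qed
qed

end
theorem proposition4p8:
  fixes sc :: "'f::field \<Rightarrow> 'a::ab_group_add \<Rightarrow> 'a"
    and mul :: "'a \<Rightarrow> 'a \<Rightarrow> 'a" and e :: 'a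
  assumes "(2::'f) \<noteq> 0"
    and "is_algebra sc mul e"
    and "involutive sc mul e"
  shows "(vN_finite mul e \<longleftrightarrow>
            (\<forall>B. subalg sc mul e B \<and> vector_space.dim sc B = 3 \<longrightarrow>
                 comm_on mul B \<or> assoc_on mul B))
       \<and> (vN_finite mul e \<longleftrightarrow>
            (\<forall>B. subalg sc mul e B \<and> vector_space.dim sc B = 3 \<longrightarrow>
                 comm_on mul B \<or> iso_to_U sc mul e B))"
proof -
  have VS: "vector_space sc" using assms(2) by (simp add: is_algebra_def)
  have la: "\<And>x y z. mul (x + y) z = mul x z + mul y z" and ra: "\<And>x y z. mul x (y + z) = mul x y + mul x z"
    and ls: "\<And>c x y. mul (sc c x) y = sc c (mul x y)" and rs: "\<And>c x y. mul x (sc c y) = sc c (mul x y)"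
    and un: "\<And>x. mul e x = x" "\<And>x. mul x e = x"
    using assms(2) by (simp_all add: is_algebra_def)
  show ?thesis
  proof (cases "e = 0")
    case True
    have z: "x = 0" for x :: 'a
    proof -
      have "mul 0 x = mul 0 x + mul 0 x" using la[of 0 0 x] by simp
      then have "mul 0 x = 0" by simp
      then show ?thesis using un(1)[of x] True by simp
    qed
    have vn: "vN_finite mul e" unfolding vN_finite_def using z by metis
    have nd: "vector_space.dim sc B \<noteq> 3" for B :: "'a set"
    proof -
      have M: "module sc" using VS by (simp add: module_iff_vector_space)
      have "B \<subseteq> module.span sc {}" using z module.span_empty[OF M] by auto
      from vector_space.dim_le_card[OF VS this] show ?thesis by simp
    qed
    show ?thesis using vn nd by blast
  next
    case False
    from assms(3) obtain inv where inv: "(\<forall>x y. inv (x + y) = inv x + inv y)"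
        "(\<forall>c x. inv (sc c x) = sc c (inv x))"
        "(\<forall>x y. inv (mul x y) = mul (inv y) (inv x))"
        "(\<forall>x. inv (inv x) = x)"
        "(\<forall>x. \<exists>t. x + inv x = sc t e)"
        "(\<forall>x. \<exists>n. mul x (inv x) = sc n e)"
      unfolding involutive_def by blast
    have "IA sc mul e inv"
      unfolding IA_def IA_axioms_def using VS la ra ls rs un inv False assms(1)
      by (simp add: module_iff_vector_space[symmetric] vector_space_def module_def)
    then interpret I: IA sc mul e inv .
    have i_iii: "vN_finite mul e \<Longrightarrow> (\<forall>B. subalg sc mul e B \<and> vector_space.dim sc B = 3 \<longrightarrow>
                 comm_on mul B \<or> iso_to_U sc mul e B)"
      unfolding vN_finite_def subalg_def comm_on_def using I.vn_to_iso by blast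
    have iii_ii: "(\<forall>B. subalg sc mul e B \<and> vector_space.dim sc B = 3 \<longrightarrow>
                 comm_on mul B \<or> iso_to_U sc mul e B) \<Longrightarrow>
         (\<forall>B. subalg sc mul e B \<and> vector_space.dim sc B = 3 \<longrightarrow>
                 comm_on mul B \<or> assoc_on mul B)"
      unfolding subalg_def assoc_on_def using I.iso_assoc by blast
    have ii_i: "(\<forall>B. subalg sc mul e B \<and> vector_space.dim sc B = 3 \<longrightarrow>
                 comm_on mul B \<or> assoc_on mul B) \<Longrightarrow> vN_finite mul e"
      unfolding subalg_def assoc_on_def comm_on_def vN_finite_def
      by (rule I.assoc_to_vn) blast
    show ?thesis using i_iii iii_ii ii_i by blast
  qed
qed

end
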